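(* Let $n\ge3$ and $A\subseteq[n-1]$ nonempty, let $w=\max A$ and $A'=A\setminus\{w\}$. If $1<w<n-1$, then $$f_n(A)=2f_{n-1}(A)+f_{n-1}(A')-\sum_{j=w-1}^{n-2}f_j(A').$$
   Context: For $m\ge1$ and a set $B$ of positive integers, $f_m(B)$ denotes the number of linear orders $q$ on $[m]$ such that for every triple $i<j<k$ in $[m]$: if $j\in B$ then $i$ is not ranked last among $\{i,j,k\}$ in $q$, and if $j\notin B$ then $k$ is not ranked first among $\{i,j,k\}$ in $q$ (i.e. the size of the set-alternating domain on $[m]$ generated by $B\cap[m]$). *)

theory Defs
  imports Main
begin

text \<open>A linear order q on [m] = {1..m} is represented by a list enumerating [m]
  without repetition, listed from first-ranked to last-ranked. The rank of x in q
  is its position  pos q x.\<close>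

definition lin_orders :: "nat \<Rightarrow> nat list set" where
  "lin_orders m = {q. distinct q \<and> set q = {1..m}}"

definition pos :: "nat list \<Rightarrow> nat \<Rightarrow> nat" where
  "pos q x = (LEAST i. i < length q \<and> q ! i = x)"

definition admissible :: "nat \<Rightarrow> nat set \<Rightarrow> nat list \<Rightarrow> bool" where
  "admissible m B q \<longleftrightarrow>
     (\<forall>i j k. 1 \<le> i \<and> i < j \<and> j < k \<and> k \<le> m \<longrightarrow>
        (j \<in> B \<longrightarrow> \<not> (pos q j < pos q i \<and> pos q k < pos q i)) \<and>
        (j \<notin> B \<longrightarrow> \<not> (pos q k < pos q i \<and> pos q k < pos q j)))"

definition f :: "nat \<Rightarrow> nat set \<Rightarrow> nat" where
  "f m B = card {q \<in> lin_orders m. admissible m B q}"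

end

theory Submission
  imports Defs
begin


lemma pos_nth: "distinct q \<Longrightarrow> i < length q \<Longrightarrow> pos q (q!i) = i"
  unfolding pos_def by (rule Least_equality) (auto simp: nth_eq_iff_index_eq)

lemma pos_in: assumes "x \<in> set q" shows "pos q x < length q \<and> q ! pos q x = x"
proof -
  obtain i where i: "i < length q" "q!i = x" using assms by (auto simp: in_set_conv_nth)
  have "pos q x \<le> i" unfolding pos_def by (rule Least_le) (use i in auto)
  moreover have "q ! pos q x = x" unfolding pos_def by (rule LeastI2[of _ i]) (use i in auto)
  ultimately show ?thesis using i by auto
qed

lemma pos_append_left: "distinct (q@r) \<Longrightarrow> x \<in> set q \<Longrightarrow> pos (q@r) x = pos q x"
  by (metis distinct_append nth_append_left pos_in pos_nth length_append trans_less_add1)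

lemma pos_append_right: "distinct (q@r) \<Longrightarrow> x \<in> set r \<Longrightarrow> pos (q@r) x = length q + pos r x"
  by (metis length_append nat_add_left_cancel_less nth_append_length_plus pos_in pos_nth)

lemma pos_map: "distinct (map g q) \<Longrightarrow> x \<in> set q \<Longrightarrow> pos (map g q) (g x) = pos q x"
  by (metis length_map nth_map pos_in pos_nth)

lemma pos_inj: "x \<in> set q \<Longrightarrow> y \<in> set q \<Longrightarrow> pos q x = pos q y \<Longrightarrow> x = y"
  by (metis pos_in)

lemma pos_upt: "a \<le> y \<Longrightarrow> y < b \<Longrightarrow> pos [a..<b] y = y - a"
  using pos_nth[of "[a..<b]" "y-a"] by simp

definition adm :: "nat set \<Rightarrow> nat list \<Rightarrow> bool" where
  "adm B q \<longleftrightarrow> (\<forall>i\<in>set q. \<forall>j\<in>set q. \<forall>k\<in>set q. i<j \<longrightarrow> j<k \<longrightarrow>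
     (j\<in>B \<longrightarrow> \<not>(pos q j < pos q i \<and> pos q k < pos q i)) \<and>
     (j\<notin>B \<longrightarrow> \<not>(pos q k < pos q i \<and> pos q k < pos q j)))"

definition DD :: "nat \<Rightarrow> nat set \<Rightarrow> nat list set" where
  "DD m B = {q. distinct q \<and> set q = {1..m} \<and> adm B q}"

lemma adm_iff: assumes "set q = {1..m}" shows "admissible m B q \<longleftrightarrow> adm B q"
proof
  assume L: "admissible m B q"
  show "adm B q" unfolding adm_def
  proof (intro ballI impI)
    fix i j k assume h: "i \<in> set q" "j \<in> set q" "k \<in> set q" "i<j" "j<k"
    then have "1 \<le> i \<and> i < j \<and> j < k \<and> k \<le> m" using assms by auto
    then show "(j\<in>B \<longrightarrow> \<not>(pos q j < pos q i \<and> pos q k < pos q i)) \<and>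
         (j\<notin>B \<longrightarrow> \<not>(pos q k < pos q i \<and> pos q k < pos q j))"
      using L unfolding admissible_def by blast
  qed
next
  assume L: "adm B q"
  show "admissible m B q" unfolding admissible_def
  proof (intro allI impI)
    fix i j k assume h: "1 \<le> i \<and> i < j \<and> j < k \<and> k \<le> m"
    then have "i \<in> set q" "j \<in> set q" "k \<in> set q" using assms by auto
    then show "(j\<in>B \<longrightarrow> \<not>(pos q j < pos q i \<and> pos q k < pos q i)) \<and>
         (j\<notin>B \<longrightarrow> \<not>(pos q k < pos q i \<and> pos q k < pos q j))"
      using L h unfolding adm_def by blast
  qed
qed

lemma f_DD: "f m B = card (DD m B)"
proof -
  have "{q \<in> lin_orders m. admissible m B q} = DD m B"
    unfolding lin_orders_def DD_def using adm_iff by auto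
  then show ?thesis unfolding f_def by simp
qed

lemma adm_snoc:
  assumes d: "distinct (q@[x])"
  shows "adm B (q@[x]) \<longleftrightarrow> adm B q \<and>
     (\<forall>j\<in>set q. \<forall>k\<in>set q. x<j \<longrightarrow> j<k \<longrightarrow> j\<notin>B \<and> pos q j < pos q k) \<and>
     (x\<notin>B \<longrightarrow> (\<forall>i\<in>set q. \<forall>k\<in>set q. i<x \<longrightarrow> x<k \<longrightarrow> pos q i < pos q k))"
proof -
  have P1: "\<And>y. y \<in> set q \<Longrightarrow> pos (q@[x]) y = pos q y" using d pos_append_left by blast
  have P2: "pos (q@[x]) x = length q" using d pos_append_right[of q "[x]" x] pos_nth[of "[x]" 0] by simp
  have P3: "\<And>y. y \<in> set q \<Longrightarrow> pos q y < length q" using pos_in by blast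
  have P4: "\<And>y z. y \<in> set q \<Longrightarrow> z \<in> set q \<Longrightarrow> pos q y = pos q z \<Longrightarrow> y = z" using pos_inj by blast
  have xq: "x \<notin> set q" using d by simp
  show ?thesis
  proof
    assume a: "adm B (q@[x])"
    have "adm B q" unfolding adm_def
    proof (intro ballI impI)
      fix i j k assume "i \<in> set q" "j \<in> set q" "k \<in> set q" "i<j" "j<k"
      then show "(j\<in>B \<longrightarrow> \<not>(pos q j < pos q i \<and> pos q k < pos q i)) \<and>
         (j\<notin>B \<longrightarrow> \<not>(pos q k < pos q i \<and> pos q k < pos q j))"
        using a P1 unfolding adm_def by (metis Un_iff set_append)
    qed
    moreover have "\<forall>j\<in>set q. \<forall>k\<in>set q. x<j \<longrightarrow> j<k \<longrightarrow> j\<notin>B \<and> pos q j < pos q k"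
    proof (intro ballI impI)
      fix j k assume h: "j \<in> set q" "k \<in> set q" "x<j" "j<k"
      have "x \<in> set (q@[x])" by simp
      then have "(j\<in>B \<longrightarrow> \<not>(pos (q@[x]) j < pos (q@[x]) x \<and> pos (q@[x]) k < pos (q@[x]) x)) \<and>
         (j\<notin>B \<longrightarrow> \<not>(pos (q@[x]) k < pos (q@[x]) x \<and> pos (q@[x]) k < pos (q@[x]) j))"
        using a h unfolding adm_def by auto
      then have "j \<notin> B" "\<not> pos q k < pos q j" using P1 P2 P3 h by auto
      moreover have "pos q j \<noteq> pos q k" using P4 h by (metis less_irrefl)
      ultimately show "j\<notin>B \<and> pos q j < pos q k" by auto
    qed
    moreover have "x\<notin>B \<longrightarrow> (\<forall>i\<in>set q. \<forall>k\<in>set q. i<x \<longrightarrow> x<k \<longrightarrow> pos q i < pos q k)"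
    proof (intro impI ballI)
      fix i k assume h: "x \<notin> B" "i \<in> set q" "k \<in> set q" "i<x" "x<k"
      have "x \<in> set (q@[x])" by simp
      then have "\<not>(pos (q@[x]) k < pos (q@[x]) i \<and> pos (q@[x]) k < pos (q@[x]) x)"
        using a h unfolding adm_def by auto
      then have "\<not> pos q k < pos q i" using P1 P2 P3 h by auto
      moreover have "pos q i \<noteq> pos q k" using P4 h by (metis less_trans less_irrefl)
      ultimately show "pos q i < pos q k" by auto
    qed
    ultimately show "adm B q \<and>
     (\<forall>j\<in>set q. \<forall>k\<in>set q. x<j \<longrightarrow> j<k \<longrightarrow> j\<notin>B \<and> pos q j < pos q k) \<and>
     (x\<notin>B \<longrightarrow> (\<forall>i\<in>set q. \<forall>k\<in>set q. i<x \<longrightarrow> x<k \<longrightarrow> pos q i < pos q k))" by blast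
  next
    assume a: "adm B q \<and>
     (\<forall>j\<in>set q. \<forall>k\<in>set q. x<j \<longrightarrow> j<k \<longrightarrow> j\<notin>B \<and> pos q j < pos q k) \<and>
     (x\<notin>B \<longrightarrow> (\<forall>i\<in>set q. \<forall>k\<in>set q. i<x \<longrightarrow> x<k \<longrightarrow> pos q i < pos q k))"
    show "adm B (q@[x])" unfolding adm_def
    proof (intro ballI impI)
      fix i j k assume h: "i \<in> set (q@[x])" "j \<in> set (q@[x])" "k \<in> set (q@[x])" "i<j" "j<k"
      show "(j\<in>B \<longrightarrow> \<not>(pos (q@[x]) j < pos (q@[x]) i \<and> pos (q@[x]) k < pos (q@[x]) i)) \<and>
         (j\<notin>B \<longrightarrow> \<not>(pos (q@[x]) k < pos (q@[x]) i \<and> pos (q@[x]) k < pos (q@[x]) j))"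
      proof (cases "i = x")
        case True
        then have jk: "j \<in> set q" "k \<in> set q" using h by auto
        then have "j\<notin>B \<and> pos q j < pos q k" using a h True by blast
        then show ?thesis using jk P1 by auto
      next
        case F1: False
        then have iq: "i \<in> set q" using h by auto
        show ?thesis
        proof (cases "j = x")
          case True
          then have kq: "k \<in> set q" using h by auto
          show ?thesis
          proof (cases "x \<in> B")
            case True
            have "pos q i < length q" using P3 iq by blast
            then show ?thesis using True \<open>j = x\<close> kq iq P1 P2 by auto
          next
            case False
            then have "pos q i < pos q k" using a h \<open>j = x\<close> kq iq by blast
            then show ?thesis using \<open>j = x\<close> kq iq P1 P2 P3 by auto
          qed
        next
          case False
          then have jq: "j \<in> set q" using h by auto
          show ?thesis
          proof (cases "k = x")
            case True
            have "pos q i < length q" "pos q j < length q" using P3 iq jq by auto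
            then show ?thesis using True iq jq P1 P2 by auto
          next
            case False
            then have kq: "k \<in> set q" using h by auto
            have "(j\<in>B \<longrightarrow> \<not>(pos q j < pos q i \<and> pos q k < pos q i)) \<and>
         (j\<notin>B \<longrightarrow> \<not>(pos q k < pos q i \<and> pos q k < pos q j))"
              using a iq jq kq h unfolding adm_def by blast
            then show ?thesis using iq jq kq P1 by simp
          qed
        qed
      qed
    qed
  qed

qed



lemma pos_Cons_hd: "pos (y#ys) y = 0"
  unfolding pos_def by (rule Least_equality) auto

lemma pos_Cons: "distinct (y#ys) \<Longrightarrow> x \<in> set ys \<Longrightarrow> pos (y#ys) x = Suc (pos ys x)"
  using pos_append_right[of "[y]" ys x] by simp

lemma adm_append_left:
  assumes d: "distinct (L@R)" and a: "adm B (L@R)" shows "adm B L"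
  unfolding adm_def
proof (intro ballI impI)
  fix i j k assume h: "i \<in> set L" "j \<in> set L" "k \<in> set L" "i<j" "j<k"
  have "(j\<in>B \<longrightarrow> \<not>(pos (L@R) j < pos (L@R) i \<and> pos (L@R) k < pos (L@R) i)) \<and>
         (j\<notin>B \<longrightarrow> \<not>(pos (L@R) k < pos (L@R) i \<and> pos (L@R) k < pos (L@R) j))"
    using a h unfolding adm_def by (metis Un_iff set_append)
  then show "(j\<in>B \<longrightarrow> \<not>(pos L j < pos L i \<and> pos L k < pos L i)) \<and>
         (j\<notin>B \<longrightarrow> \<not>(pos L k < pos L i \<and> pos L k < pos L j))"
    using h d pos_append_left[OF d] by simp
qed

lemma adm_append_sep:
  assumes d: "distinct (L@R)" and aL: "adm B L" and aR: "adm B R"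
    and sep: "\<forall>a\<in>set L. \<forall>b\<in>set R. a < b"
  shows "adm B (L@R)"
  unfolding adm_def
proof (intro ballI impI)
  fix i j k assume h: "i \<in> set (L@R)" "j \<in> set (L@R)" "k \<in> set (L@R)" "i<j" "j<k"
  show "(j\<in>B \<longrightarrow> \<not>(pos (L@R) j < pos (L@R) i \<and> pos (L@R) k < pos (L@R) i)) \<and>
         (j\<notin>B \<longrightarrow> \<not>(pos (L@R) k < pos (L@R) i \<and> pos (L@R) k < pos (L@R) j))"
  proof (cases "k \<in> set L")
    case True
    have "i \<in> set L"
    proof (rule ccontr)
      assume "i \<notin> set L" then have "i \<in> set R" using h by auto
      then have "k < i" using sep True by blast
      then show False using h by simp
    qed
    moreover have "j \<in> set L"
    proof (rule ccontr)
      assume "j \<notin> set L" then have "j \<in> set R" using h by auto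
      then have "k < j" using sep True by blast
      then show False using h by simp
    qed
    ultimately have "(j\<in>B \<longrightarrow> \<not>(pos L j < pos L i \<and> pos L k < pos L i)) \<and>
         (j\<notin>B \<longrightarrow> \<not>(pos L k < pos L i \<and> pos L k < pos L j))"
      using True aL h unfolding adm_def by blast
    then show ?thesis using True \<open>i \<in> set L\<close> \<open>j \<in> set L\<close> pos_append_left[OF d] by simp
  next
    case kL: False
    then have kR: "k \<in> set R" using h by auto
    show ?thesis
    proof (cases "i \<in> set R")
      case True
      have "j \<in> set R"
      proof (rule ccontr)
        assume "j \<notin> set R" then have "j \<in> set L" using h by auto
        then have "j < i" using sep True by blast
        then show False using h by simp
      qed
      then have "(j\<in>B \<longrightarrow> \<not>(pos R j < pos R i \<and> pos R k < pos R i)) \<and>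
         (j\<notin>B \<longrightarrow> \<not>(pos R k < pos R i \<and> pos R k < pos R j))"
        using True kR aR h unfolding adm_def by blast
      then show ?thesis using True kR \<open>j \<in> set R\<close> pos_append_right[OF d] by simp
    next
      case False
      then have iL: "i \<in> set L" using h by auto
      have "pos (L@R) i < length L" using pos_append_left[OF d iL] pos_in[OF iL] by simp
      moreover have "pos (L@R) k \<ge> length L" using pos_append_right[OF d kR] by simp
      ultimately show ?thesis by simp
    qed
  qed
qed

lemma pos_sorted:
  assumes "sorted q" "distinct q" "a \<in> set q" "b \<in> set q" "a < b"
  shows "pos q a < pos q b"
proof (rule ccontr)
  assume "\<not> pos q a < pos q b"
  then have "q ! pos q b \<le> q ! pos q a" using assms pos_in sorted_nth_mono by (metis not_less)
  then show False using assms pos_in by (metis not_less)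
qed

lemma adm_sorted: "sorted q \<Longrightarrow> distinct q \<Longrightarrow> adm B q"
proof -
  assume a: "sorted q" "distinct q"
  show ?thesis unfolding adm_def
  proof (intro ballI impI)
    fix i j k assume h: "i \<in> set q" "j \<in> set q" "k \<in> set q" "i<j" "j<k"
    have "pos q i < pos q j" "pos q i < pos q k" using pos_sorted[OF a] h by (blast, metis less_trans)
    then show "(j\<in>B \<longrightarrow> \<not>(pos q j < pos q i \<and> pos q k < pos q i)) \<and>
         (j\<notin>B \<longrightarrow> \<not>(pos q k < pos q i \<and> pos q k < pos q j))" by simp
  qed
qed

lemma sorted_of_pos:
  assumes d: "distinct q" and m: "\<forall>a\<in>set q. \<forall>b\<in>set q. a<b \<longrightarrow> pos q a < pos q b"
  shows "sorted q"
  unfolding sorted_iff_nth_mono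
proof (intro allI impI)
  fix i j assume ij: "i \<le> j" "j < length q"
  show "q!i \<le> q!j"
  proof (rule ccontr)
    assume "\<not> q!i \<le> q!j"
    then have "pos q (q!j) < pos q (q!i)" using m ij by simp
    then show False using pos_nth[OF d] ij by simp
  qed
qed

lemma partition_pos:
  "distinct q \<Longrightarrow> (\<forall>a\<in>set q. \<forall>b\<in>set q. P a \<longrightarrow> \<not>P b \<longrightarrow> pos q a < pos q b)
   \<Longrightarrow> q = filter P q @ filter (\<lambda>y. \<not>P y) q"
proof (induction q)
  case Nil
  then show ?case by simp
next
  case (Cons y ys)
  show ?case
  proof (cases "P y")
    case True
    have "\<forall>a\<in>set ys. \<forall>b\<in>set ys. P a \<longrightarrow> \<not>P b \<longrightarrow> pos ys a < pos ys b"
      using Cons.prems pos_Cons[OF Cons.prems(1)] by fastforce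
    then have "ys = filter P ys @ filter (\<lambda>y. \<not>P y) ys" using Cons by simp
    then show ?thesis using True by simp
  next
    case False
    have "\<forall>a\<in>set ys. \<not> P a"
    proof
      fix a assume a: "a \<in> set ys"
      show "\<not> P a"
      proof
        assume "P a"
        then have "pos (y#ys) a < pos (y#ys) y" using Cons.prems False a by simp
        then show False by (simp add: pos_Cons_hd)
      qed
    qed
    then show ?thesis using False by simp
  qed
qed

lemma adm_map:
  assumes d: "distinct (map g q)"
    and mono: "\<And>a b. a \<in> set q \<Longrightarrow> b \<in> set q \<Longrightarrow> (g a < g b) = (a < b)"
    and mem: "\<And>a. a \<in> set q \<Longrightarrow> (g a \<in> B') = (a \<in> B)"
  shows "adm B' (map g q) \<longleftrightarrow> adm B q"
  unfolding adm_def using d by (simp add: pos_map mono mem)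



lemma DD_finite: "finite (DD m B)"
proof -
  have "DD m B \<subseteq> {q. set q \<subseteq> {1..m} \<and> length q \<le> m}"
    unfolding DD_def using distinct_card by fastforce
  then show ?thesis using finite_lists_length_le[of "{1..m}" m] finite_subset by auto
qed

lemma card_last_in:
  assumes "finite I"
  shows "card {q\<in>DD m B. last q \<in> I} = (\<Sum>x\<in>I. card {q\<in>DD m B. last q = x})"
proof -
  have "{q\<in>DD m B. last q \<in> I} = (\<Union>x\<in>I. {q\<in>DD m B. last q = x})" by auto
  moreover have "card (\<Union>x\<in>I. {q\<in>DD m B. last q = x}) = (\<Sum>x\<in>I. card {q\<in>DD m B. last q = x})"
    by (rule card_UN_disjoint) (use assms DD_finite in auto)
  ultimately show ?thesis by simp
qed

lemma last_in_DD: "m \<ge> 1 \<Longrightarrow> q \<in> DD m B \<Longrightarrow> last q \<in> {1..m}"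
  unfolding DD_def by (metis (mono_tags, lifting) atLeastAtMost_iff empty_iff empty_set last_in_set mem_Collect_eq order_refl)

lemma card_DD_sum: "m \<ge> 1 \<Longrightarrow> card (DD m B) = (\<Sum>x=1..m. card {q\<in>DD m B. last q = x})"
proof -
  assume m: "m \<ge> 1"
  have "{q\<in>DD m B. last q \<in> {1..m}} = DD m B" using last_in_DD[OF m] by auto
  then show ?thesis using card_last_in[of "{1..m}" m B] by simp
qed

lemma card_last_less: "m \<ge> 1 \<Longrightarrow> card {q\<in>DD m B. last q < w} = (\<Sum>x\<in>{1..<w}. card {q\<in>DD m B. last q = x})"
proof -
  assume m: "m \<ge> 1"
  have "{q\<in>DD m B. last q \<in> {1..<w}} = {q\<in>DD m B. last q < w}" using last_in_DD[OF m] by fastforce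
  then show ?thesis using card_last_in[of "{1..<w}" m B] by simp
qed

lemma DD_butlast:
  assumes "q \<in> DD m B" "last q = x" "m \<ge> 1"
  shows "q = butlast q @ [x]" "distinct (butlast q @ [x])" "set (butlast q) = {1..m} - {x}"
    "adm B (butlast q @ [x])"
proof -
  have dq: "distinct q" "set q = {1..m}" "adm B q" using assms(1) unfolding DD_def by auto
  have ne: "q \<noteq> []" using dq assms(3) by auto
  show q: "q = butlast q @ [x]" using ne assms(2) append_butlast_last_id by metis
  have e: "butlast q @ [x] = q" using q by simp
  show d: "distinct (butlast q @ [x])" using e dq by simp
  have "x \<notin> set (butlast q)" using d by simp
  moreover have "set q = insert x (set (butlast q))" using arg_cong[OF e, of set] by simp
  ultimately have "set (butlast q) = set q - {x}" by auto
  then show "set (butlast q) = {1..m} - {x}" using dq by auto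
  show "adm B (butlast q @ [x])" using e dq by simp
qed

lemma fiber_top:
  assumes m: "m \<ge> 1"
  shows "{q\<in>DD m B. last q = m} = (\<lambda>p. p@[m]) ` DD (m-1) B"
proof
  show "{q\<in>DD m B. last q = m} \<subseteq> (\<lambda>p. p@[m]) ` DD (m-1) B"
  proof
    fix q assume "q \<in> {q\<in>DD m B. last q = m}"
    then have q: "q \<in> DD m B" "last q = m" by auto
    note b = DD_butlast[OF q m]
    have "adm B (butlast q)" using b(4) unfolding adm_snoc[OF b(2)] by (elim conjE)
    moreover have "set (butlast q) = {1..m-1}" unfolding b(3) using m by auto
    ultimately have "butlast q \<in> DD (m-1) B" using b(2) unfolding DD_def by simp
    then show "q \<in> (\<lambda>p. p@[m]) ` DD (m-1) B" by (rule image_eqI[where f="\<lambda>p. p@[m]", OF b(1)])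
  qed
next
  show "(\<lambda>p. p@[m]) ` DD (m-1) B \<subseteq> {q\<in>DD m B. last q = m}"
  proof
    fix q assume "q \<in> (\<lambda>p. p@[m]) ` DD (m-1) B"
    then obtain p where p: "p \<in> DD (m-1) B" "q = p@[m]" by auto
    have sp: "set p = {1..m-1}" "distinct p" "adm B p" using p unfolding DD_def by auto
    have d: "distinct (p@[m])" using sp by auto
    have "\<forall>j\<in>set p. \<not> m < j" "\<forall>k\<in>set p. \<not> m < k" using sp by auto
    then have "adm B (p@[m])" unfolding adm_snoc[OF d] using sp by blast
    moreover have "set (p@[m]) = {1..m}" using sp m by auto
    ultimately show "q \<in> {q\<in>DD m B. last q = m}" using p d unfolding DD_def by simp
  qed
qed

lemma card_fiber_top: "m \<ge> 1 \<Longrightarrow> card {q\<in>DD m B. last q = m} = card (DD (m-1) B)"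
  by (simp add: fiber_top card_image inj_on_def)

lemma fiber_none:
  assumes "w \<in> B" "x < w" "w < m"
  shows "{q\<in>DD m B. last q = x} = {}"
proof (rule ccontr)
  assume "{q\<in>DD m B. last q = x} \<noteq> {}"
  then obtain q where q: "q \<in> DD m B" "last q = x" by auto
  have m: "m \<ge> 1" using assms by simp
  note b = DD_butlast[OF q m]
  have w: "w \<in> set (butlast q)" and mm: "m \<in> set (butlast q)" using b(3) assms by auto
  have C: "\<forall>j\<in>set (butlast q). \<forall>k\<in>set (butlast q). x<j \<longrightarrow> j<k \<longrightarrow> j\<notin>B \<and> pos (butlast q) j < pos (butlast q) k"
    using adm_snoc[OF b(2)] b(4) by simp
  have "w \<notin> B" using C[rule_format, OF w mm] assms by simp
  then show False using assms by simp
qed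



lemma fiber_big:
  assumes x: "1 \<le> x" "x < m" and Bx: "\<forall>b\<in>B. b < x"
  shows "{q\<in>DD m B. last q = x} = (\<lambda>L. L @ [Suc x..<Suc m] @ [x]) ` DD (x-1) B"
proof
  show "{q\<in>DD m B. last q = x} \<subseteq> (\<lambda>L. L @ [Suc x..<Suc m] @ [x]) ` DD (x-1) B"
  proof
    fix q assume "q \<in> {q\<in>DD m B. last q = x}"
    then have q: "q \<in> DD m B" "last q = x" by auto
    have m1: "m \<ge> 1" using x by simp
    note b = DD_butlast[OF q m1]
    define p where "p = butlast q"
    have dp: "distinct (p@[x])" "set p = {1..m} - {x}" "adm B (p@[x])" unfolding p_def by (rule b(2), rule b(3), rule b(4))
    have xB: "x \<notin> B" using Bx by auto
    have S: "adm B p \<and>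
     (\<forall>j\<in>set p. \<forall>k\<in>set p. x<j \<longrightarrow> j<k \<longrightarrow> j\<notin>B \<and> pos p j < pos p k) \<and>
     (x\<notin>B \<longrightarrow> (\<forall>i\<in>set p. \<forall>k\<in>set p. i<x \<longrightarrow> x<k \<longrightarrow> pos p i < pos p k))"
      using iffD1[OF adm_snoc[OF dp(1)] dp(3)] .
    have ap: "adm B p" using S by blast
    have C2: "\<And>j k. j\<in>set p \<Longrightarrow> k\<in>set p \<Longrightarrow> x<j \<Longrightarrow> j<k \<Longrightarrow> pos p j < pos p k" using S by blast
    have C3: "\<And>i k. i\<in>set p \<Longrightarrow> k\<in>set p \<Longrightarrow> i<x \<Longrightarrow> x<k \<Longrightarrow> pos p i < pos p k" using S xB by blast
    have dp0: "distinct p" using dp(1) by simp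
    have xp: "x \<notin> set p" using dp(2) by simp
    define L where "L = filter (\<lambda>y. y < x) p"
    define R where "R = filter (\<lambda>y. \<not> y < x) p"
    have "\<forall>a\<in>set p. \<forall>b\<in>set p. a < x \<longrightarrow> \<not> b < x \<longrightarrow> pos p a < pos p b"
    proof (intro ballI impI)
      fix a b assume h: "a \<in> set p" "b \<in> set p" "a < x" "\<not> b < x"
      then have "x < b" using xp by (metis linorder_neqE_nat)
      then show "pos p a < pos p b" using C3 h by blast
    qed
    then have pLR: "p = L @ R" unfolding L_def R_def by (rule partition_pos[OF dp0])
    have dLR: "distinct (L@R)" using dp0 pLR by simp
    have setL: "set L = {1..x-1}" unfolding L_def set_filter dp(2) using x by auto
    have setR0: "set R = {y \<in> {1..m} - {x}. \<not> y < x}" unfolding R_def set_filter dp(2) by simp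
    have setR: "set R = {Suc x..m}" unfolding setR0 by auto
    have posR: "\<forall>a\<in>set R. \<forall>b\<in>set R. a<b \<longrightarrow> pos R a < pos R b"
    proof (intro ballI impI)
      fix a b assume h: "a \<in> set R" "b \<in> set R" "a < b"
      have "a \<in> set p" "b \<in> set p" "x < a" using h pLR setR by auto
      then have "pos p a < pos p b" using C2 h by blast
      then show "pos R a < pos R b" using pos_append_right[OF dLR] h pLR by simp
    qed
    have dR: "distinct R" using dLR by simp
    have sR: "sorted R" by (rule sorted_of_pos[OF dR posR])
    have eR: "set R = set [Suc x..<Suc m]" unfolding setR by (simp only: set_upt atLeastLessThanSuc_atLeastAtMost)
    have R: "R = [Suc x..<Suc m]"
      by (rule sorted_distinct_set_unique[OF sR dR sorted_upt distinct_upt eR])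
    have "adm B L" using adm_append_left[OF dLR] ap pLR by simp
    then have "L \<in> DD (x-1) B" unfolding DD_def using dLR setL by simp
    moreover have "q = L @ [Suc x..<Suc m] @ [x]" using b(1) pLR R unfolding p_def by simp
    ultimately show "q \<in> (\<lambda>L. L @ [Suc x..<Suc m] @ [x]) ` DD (x-1) B" by blast
  qed
next
  show "(\<lambda>L. L @ [Suc x..<Suc m] @ [x]) ` DD (x-1) B \<subseteq> {q\<in>DD m B. last q = x}"
  proof
    fix q assume "q \<in> (\<lambda>L. L @ [Suc x..<Suc m] @ [x]) ` DD (x-1) B"
    then obtain L where L: "L \<in> DD (x-1) B" "q = L @ [Suc x..<Suc m] @ [x]" by auto
    define R where "R = [Suc x..<Suc m]"
    have sL: "set L = {1..x-1}" "distinct L" "adm B L" using L unfolding DD_def by auto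
    have sR: "set R = {Suc x..m}" "distinct R" "sorted R" unfolding R_def
      by (simp only: set_upt atLeastLessThanSuc_atLeastAtMost, rule distinct_upt, rule sorted_upt)
    have sep: "\<forall>a\<in>set L. \<forall>b\<in>set R. a < b" using sL sR by auto
    have dLR: "distinct (L@R)" using sL sR sep by auto
    have d: "distinct ((L@R)@[x])" using dLR sL sR by auto
    have aLR: "adm B (L@R)" by (rule adm_append_sep[OF dLR sL(3) adm_sorted[OF sR(3) sR(2)] sep])
    have C2: "\<forall>j\<in>set (L@R). \<forall>k\<in>set (L@R). x<j \<longrightarrow> j<k \<longrightarrow> j\<notin>B \<and> pos (L@R) j < pos (L@R) k"
    proof (intro ballI impI)
      fix j k assume h: "j \<in> set (L@R)" "k \<in> set (L@R)" "x<j" "j<k"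
      then have jk: "j \<in> set R" "k \<in> set R" using sL by auto
      have "j \<notin> B" using Bx h by auto
      moreover have "pos R j < pos R k" using pos_sorted[OF sR(3) sR(2) jk h(4)] .
      ultimately show "j\<notin>B \<and> pos (L@R) j < pos (L@R) k" using pos_append_right[OF dLR] jk by simp
    qed
    have C3: "\<forall>i\<in>set (L@R). \<forall>k\<in>set (L@R). i<x \<longrightarrow> x<k \<longrightarrow> pos (L@R) i < pos (L@R) k"
    proof (intro ballI impI)
      fix i k assume h: "i \<in> set (L@R)" "k \<in> set (L@R)" "i<x" "x<k"
      then have ik: "i \<in> set L" "k \<in> set R" using sR sL by auto
      have "pos (L@R) i < length L" using pos_append_left[OF dLR ik(1)] pos_in[OF ik(1)] by simp
      then show "pos (L@R) i < pos (L@R) k" using pos_append_right[OF dLR ik(2)] by simp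
    qed
    have "adm B ((L@R)@[x])" unfolding adm_snoc[OF d] using aLR C2 C3 by blast
    moreover have "set ((L@R)@[x]) = {1..m}" using sL sR x by auto
    ultimately have "(L@R)@[x] \<in> DD m B" unfolding DD_def using d by simp
    then show "q \<in> {q\<in>DD m B. last q = x}" using L(2) unfolding R_def by simp
  qed
qed

lemma card_fiber_big:
  assumes "1 \<le> x" "x < m" "\<forall>b\<in>B. b < x"
  shows "card {q\<in>DD m B. last q = x} = card (DD (x-1) B)"
  unfolding fiber_big[OF assms] by (rule card_image) (simp add: inj_on_def)



definition TT :: "nat \<Rightarrow> nat set \<Rightarrow> nat \<Rightarrow> nat list set" where
  "TT w B M = {q\<in>DD M B. \<forall>j\<in>set q. \<forall>k\<in>set q. w \<le> j \<longrightarrow> j < k \<longrightarrow> pos q j < pos q k}"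

lemma G_TT:
  assumes wA: "w \<in> A" and Aw: "\<forall>b\<in>A. b \<le> w" and w1: "1 \<le> w" and wM: "w \<le> M"
  shows "card {q\<in>DD (Suc M) A. last q = w} = card (TT w (A - {w}) M)"
proof -
  define g where "g = (\<lambda>y::nat. if w \<le> y then Suc y else y)"
  define g' where "g' = (\<lambda>y::nat. if w < y then y - 1 else y)"
  have ginj: "inj g" unfolding g_def inj_on_def by auto
  have eq: "{q\<in>DD (Suc M) A. last q = w} = (\<lambda>p. p@[w]) ` (map g ` TT w (A - {w}) M)"
  proof
    show "{q\<in>DD (Suc M) A. last q = w} \<subseteq> (\<lambda>p. p@[w]) ` (map g ` TT w (A - {w}) M)"
    proof
      fix q assume "q \<in> {q\<in>DD (Suc M) A. last q = w}"
      then have q: "q \<in> DD (Suc M) A" "last q = w" by auto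
      have m1: "Suc M \<ge> 1" by simp
      note b = DD_butlast[OF q m1]
      define p where "p = butlast q"
      have dp: "distinct (p@[w])" "set p = {1..Suc M} - {w}" "adm A (p@[w])"
        unfolding p_def by (rule b(2), rule b(3), rule b(4))
      have S: "adm A p \<and>
        (\<forall>j\<in>set p. \<forall>k\<in>set p. w<j \<longrightarrow> j<k \<longrightarrow> j\<notin>A \<and> pos p j < pos p k) \<and>
        (w\<notin>A \<longrightarrow> (\<forall>i\<in>set p. \<forall>k\<in>set p. i<w \<longrightarrow> w<k \<longrightarrow> pos p i < pos p k))"
        using iffD1[OF adm_snoc[OF b(2)] b(4)] unfolding p_def .
      have ap: "adm A p" using S by blast
      have C2: "\<And>j k. j\<in>set p \<Longrightarrow> k\<in>set p \<Longrightarrow> w<j \<Longrightarrow> j<k \<Longrightarrow> pos p j < pos p k" using S by blast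
      have dp0: "distinct p" using dp(1) by simp
      have wp: "\<And>y. y \<in> set p \<Longrightarrow> y \<noteq> w" using dp(1) by auto
      have mono: "\<And>a b. a \<in> set p \<Longrightarrow> b \<in> set p \<Longrightarrow> (g' a < g' b) = (a < b)"
      proof -
        fix a b assume "a \<in> set p" "b \<in> set p"
        then have "a \<noteq> w" "b \<noteq> w" using wp by auto
        then show "(g' a < g' b) = (a < b)" unfolding g'_def by auto
      qed
      have inj': "inj_on g' (set p)"
        unfolding inj_on_def by (metis mono not_less_iff_gr_or_eq)
      define q' where "q' = map g' p"
      have dq': "distinct q'" unfolding q'_def using dp0 inj' by (simp add: distinct_map)
      have gg: "map g q' = p" unfolding q'_def map_map
      proof (rule map_idI)
        fix y assume "y \<in> set p"
        then have "y \<noteq> w" using wp by auto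
        then show "(g \<circ> g') y = y" unfolding g_def g'_def by auto
      qed
      have setq': "set q' = {1..M}"
      proof
        show "set q' \<subseteq> {1..M}"
        proof
          fix z assume "z \<in> set q'"
          then obtain y where y: "y \<in> set p" "z = g' y" unfolding q'_def by auto
          have "y \<in> {1..Suc M}" "y \<noteq> w" using y(1) unfolding dp(2) by auto
          then show "z \<in> {1..M}" using y(2) w1 wM unfolding g'_def by auto
        qed
      next
        show "{1..M} \<subseteq> set q'"
        proof
          fix z assume z: "z \<in> {1..M}"
          show "z \<in> set q'"
          proof (cases "z < w")
            case True
            then have "z \<in> set p" unfolding dp(2) using z wM by auto
            moreover have "g' z = z" using True unfolding g'_def by auto
            ultimately show ?thesis unfolding q'_def by (metis image_eqI set_map)
          next
            case False
            then have "Suc z \<in> set p" unfolding dp(2) using z by auto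
            moreover have "g' (Suc z) = z" using False unfolding g'_def by auto
            ultimately show ?thesis unfolding q'_def by (metis image_eqI set_map)
          qed
        qed
      qed
      have mem: "\<And>a. a \<in> set p \<Longrightarrow> (g' a \<in> A - {w}) = (a \<in> A)"
      proof -
        fix a assume a: "a \<in> set p"
        then have aw: "a \<noteq> w" using wp by auto
        show "(g' a \<in> A - {w}) = (a \<in> A)"
        proof (cases "w < a")
          case True
          then have "a \<notin> A" using Aw by auto
          moreover have "g' a \<notin> A - {w}" using True Aw unfolding g'_def
            by (metis Diff_iff le_antisym le_diff_conv not_less_eq_eq singletonI Suc_diff_1 less_imp_le_nat less_le_trans less_one not_less)
          ultimately show ?thesis by simp
        next
          case False
          then show ?thesis unfolding g'_def using aw by simp
        qed
      qed
      have adq: "adm (A - {w}) q'" unfolding q'_def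
        using adm_map[of g' p "A - {w}" A] dq' mono mem ap unfolding q'_def by simp
      have incr: "\<forall>j\<in>set q'. \<forall>k\<in>set q'. w \<le> j \<longrightarrow> j < k \<longrightarrow> pos q' j < pos q' k"
      proof (intro ballI impI)
        fix j k assume h: "j \<in> set q'" "k \<in> set q'" "w \<le> j" "j < k"
        obtain j0 where j0: "j0 \<in> set p" "j = g' j0" using h(1) unfolding q'_def by auto
        obtain k0 where k0: "k0 \<in> set p" "k = g' k0" using h(2) unfolding q'_def by auto
        have "j0 < k0" using mono[OF j0(1) k0(1)] j0 k0 h by simp
        have "j0 \<noteq> w" using wp j0 by auto
        then have "w < j0" using h(3) j0(2) unfolding g'_def by (cases "w < j0") auto
        then have "pos p j0 < pos p k0" using C2 j0 k0 \<open>j0 < k0\<close> by blast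
        then show "pos q' j < pos q' k" using pos_map[of g' p] dq' j0 k0 unfolding q'_def by simp
      qed
      have "q' \<in> TT w (A - {w}) M" unfolding TT_def DD_def using dq' setq' adq incr by simp
      moreover have "q = (map g q') @ [w]" using b(1) gg unfolding p_def by simp
      ultimately show "q \<in> (\<lambda>p. p@[w]) ` (map g ` TT w (A - {w}) M)" by blast
    qed
  next
    show "(\<lambda>p. p@[w]) ` (map g ` TT w (A - {w}) M) \<subseteq> {q\<in>DD (Suc M) A. last q = w}"
    proof
      fix q assume "q \<in> (\<lambda>p. p@[w]) ` (map g ` TT w (A - {w}) M)"
      then obtain q' where q': "q' \<in> TT w (A - {w}) M" "q = map g q' @ [w]" by auto
      have sq: "distinct q'" "set q' = {1..M}" "adm (A - {w}) q'"
        and incr: "\<forall>j\<in>set q'. \<forall>k\<in>set q'. w \<le> j \<longrightarrow> j < k \<longrightarrow> pos q' j < pos q' k"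
        using q'(1) unfolding TT_def DD_def by auto
      define p where "p = map g q'"
      have dp0: "distinct p" unfolding p_def using sq(1) ginj by (simp add: distinct_map inj_on_subset[OF ginj subset_UNIV])
      have wnot: "w \<notin> set p" unfolding p_def g_def by auto
      have d: "distinct (p@[w])" using dp0 wnot by simp
      have setp: "set p = {1..Suc M} - {w}"
      proof
        show "set p \<subseteq> {1..Suc M} - {w}"
        proof
          fix z assume "z \<in> set p"
          then obtain y where y: "y \<in> set q'" "z = g y" unfolding p_def by auto
          have "y \<in> {1..M}" using y(1) unfolding sq(2) by simp
          then show "z \<in> {1..Suc M} - {w}" using y(2) unfolding g_def by auto
        qed
      next
        show "{1..Suc M} - {w} \<subseteq> set p"
        proof
          fix z assume z: "z \<in> {1..Suc M} - {w}"
          show "z \<in> set p"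
          proof (cases "z < w")
            case True
            then have "z \<in> set q'" unfolding sq(2) using z wM by auto
            moreover have "g z = z" using True unfolding g_def by auto
            ultimately show ?thesis unfolding p_def by (metis image_eqI set_map)
          next
            case False
            then have "z - 1 \<in> set q'" unfolding sq(2) using z w1 by auto
            moreover have "g (z - 1) = z" using False z unfolding g_def by auto
            ultimately show ?thesis unfolding p_def by (metis image_eqI set_map)
          qed
        qed
      qed
      have mono: "\<And>a b. a \<in> set q' \<Longrightarrow> b \<in> set q' \<Longrightarrow> (g a < g b) = (a < b)"
        unfolding g_def by auto
      have mem: "\<And>a. a \<in> set q' \<Longrightarrow> (g a \<in> A) = (a \<in> A - {w})"
      proof -
        fix a assume a: "a \<in> set q'"
        show "(g a \<in> A) = (a \<in> A - {w})"
        proof (cases "w \<le> a")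
          case True
          then have "g a \<notin> A" using Aw unfolding g_def by auto
          moreover have "a \<notin> A - {w}" using True Aw by auto
          ultimately show ?thesis by simp
        next
          case False
          then show ?thesis unfolding g_def by auto
        qed
      qed
      have ap: "adm A p" unfolding p_def
        using adm_map[of g q' A "A - {w}"] dp0 mono mem sq(3) unfolding p_def by simp
      have C2: "\<forall>j\<in>set p. \<forall>k\<in>set p. w<j \<longrightarrow> j<k \<longrightarrow> j\<notin>A \<and> pos p j < pos p k"
      proof (intro ballI impI)
        fix j k assume h: "j \<in> set p" "k \<in> set p" "w < j" "j < k"
        obtain j0 where j0: "j0 \<in> set q'" "j = g j0" using h(1) unfolding p_def by auto
        obtain k0 where k0: "k0 \<in> set q'" "k = g k0" using h(2) unfolding p_def by auto
        have "j0 < k0" using mono[OF j0(1) k0(1)] j0 k0 h by simp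
        have "w \<le> j0" using h(3) j0(2) unfolding g_def by (cases "w \<le> j0") auto
        then have "pos q' j0 < pos q' k0" using incr j0 k0 \<open>j0 < k0\<close> by blast
        moreover have "j \<notin> A" using h(3) Aw by auto
        ultimately show "j\<notin>A \<and> pos p j < pos p k" using pos_map[of g q'] dp0 j0 k0 unfolding p_def by simp
      qed
      have "adm A (p@[w])" unfolding adm_snoc[OF d] using ap C2 wA by blast
      moreover have "set (p@[w]) = {1..Suc M}" unfolding set_append setp using wM w1 by auto
      ultimately have "p@[w] \<in> DD (Suc M) A" unfolding DD_def using d by simp
      then show "q \<in> {q\<in>DD (Suc M) A. last q = w}" using q'(2) unfolding p_def by simp
    qed
  qed
  have "card {q\<in>DD (Suc M) A. last q = w} = card (map g ` TT w (A - {w}) M)"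
    unfolding eq by (rule card_image) (simp add: inj_on_def)
  also have "\<dots> = card (TT w (A - {w}) M)"
    by (rule card_image) (meson ginj inj_mapI inj_on_subset subset_UNIV)
  finally show ?thesis .
qed



lemma pos_last: assumes "distinct q" "q \<noteq> []" shows "pos q (last q) = length q - 1"
  using pos_nth[OF assms(1), of "length q - 1"] assms(2) by (simp add: last_conv_nth)

lemma TT_rec:
  assumes Bw: "\<forall>b\<in>B. b < w" and w1: "1 \<le> w" and wM: "w < M"
  shows "card (TT w B M) = card (TT w B (M-1)) + card {q\<in>DD M B. last q < w}"
proof -
  have M1: "M \<ge> 1" using w1 wM by simp
  have split: "TT w B M = {q\<in>TT w B M. last q = M} \<union> {q\<in>DD M B. last q < w}"
  proof
    show "TT w B M \<subseteq> {q\<in>TT w B M. last q = M} \<union> {q\<in>DD M B. last q < w}"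
    proof
      fix q assume qT: "q \<in> TT w B M"
      then have qD: "q \<in> DD M B" and incr: "\<forall>j\<in>set q. \<forall>k\<in>set q. w \<le> j \<longrightarrow> j < k \<longrightarrow> pos q j < pos q k"
        unfolding TT_def by auto
      have sq: "distinct q" "set q = {1..M}" using qD unfolding DD_def by auto
      have ne: "q \<noteq> []" using sq M1 by auto
      have lx: "last q \<in> {1..M}" using last_in_DD[OF M1 qD] .
      have "last q = M \<or> last q < w"
      proof (rule ccontr)
        assume "\<not> (last q = M \<or> last q < w)"
        then have h: "w \<le> last q" "last q < M" using lx by auto
        have "last q \<in> set q" "M \<in> set q" unfolding sq(2) using lx M1 by auto
        then have "pos q (last q) < pos q M" using incr h by blast
        moreover have "pos q M < length q" using pos_in[OF \<open>M \<in> set q\<close>] by simp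
        ultimately show False using pos_last[OF sq(1) ne] by simp
      qed
      then show "q \<in> {q\<in>TT w B M. last q = M} \<union> {q\<in>DD M B. last q < w}" using qT qD by auto
    qed
  next
    show "{q\<in>TT w B M. last q = M} \<union> {q\<in>DD M B. last q < w} \<subseteq> TT w B M"
    proof
      fix q assume "q \<in> {q\<in>TT w B M. last q = M} \<union> {q\<in>DD M B. last q < w}"
      then consider "q \<in> TT w B M" | "q \<in> DD M B" "last q < w" by auto
      then show "q \<in> TT w B M"
      proof cases
        case 1 then show ?thesis .
      next
        case 2
        define x where "x = last q"
        have x: "x < w" using 2 unfolding x_def by simp
        note b = DD_butlast[OF 2(1) x_def[symmetric] M1]
        define p where "p = butlast q"
        have S: "adm B p \<and>
          (\<forall>j\<in>set p. \<forall>k\<in>set p. x<j \<longrightarrow> j<k \<longrightarrow> j\<notin>B \<and> pos p j < pos p k) \<and>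
          (x\<notin>B \<longrightarrow> (\<forall>i\<in>set p. \<forall>k\<in>set p. i<x \<longrightarrow> x<k \<longrightarrow> pos p i < pos p k))"
          using iffD1[OF adm_snoc[OF b(2)] b(4)] unfolding p_def .
        have qp: "q = p @ [x]" using b(1) unfolding p_def .
        have dq: "distinct (p @ [x])" using b(2) unfolding p_def .
        have incr: "\<forall>j\<in>set q. \<forall>k\<in>set q. w \<le> j \<longrightarrow> j < k \<longrightarrow> pos q j < pos q k"
        proof (intro ballI impI)
          fix j k assume h: "j \<in> set q" "k \<in> set q" "w \<le> j" "j < k"
          have jk: "j \<in> set p" "k \<in> set p" using h x qp by auto
          have "pos p j < pos p k" using S jk h x by auto
          then show "pos q j < pos q k" using pos_append_left[OF dq] jk qp by simp
        qed
        show ?thesis unfolding TT_def using 2 incr by simp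
      qed
    qed
  qed
  have top: "{q\<in>TT w B M. last q = M} = (\<lambda>p. p@[M]) ` TT w B (M-1)"
  proof
    show "{q\<in>TT w B M. last q = M} \<subseteq> (\<lambda>p. p@[M]) ` TT w B (M-1)"
    proof
      fix q assume "q \<in> {q\<in>TT w B M. last q = M}"
      then have q: "q \<in> DD M B" "last q = M" and incr: "\<forall>j\<in>set q. \<forall>k\<in>set q. w \<le> j \<longrightarrow> j < k \<longrightarrow> pos q j < pos q k"
        unfolding TT_def by auto
      then have "q \<in> (\<lambda>p. p@[M]) ` DD (M-1) B" using fiber_top[OF M1, of B] by blast
      then obtain p where p: "p \<in> DD (M-1) B" "q = p@[M]" by auto
      have dq: "distinct (p@[M])" using q(1) p(2) unfolding DD_def by simp
      have "\<forall>j\<in>set p. \<forall>k\<in>set p. w \<le> j \<longrightarrow> j < k \<longrightarrow> pos p j < pos p k"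
      proof (intro ballI impI)
        fix j k assume h: "j \<in> set p" "k \<in> set p" "w \<le> j" "j < k"
        then have "pos q j < pos q k" using incr p(2) by simp
        then show "pos p j < pos p k" using pos_append_left[OF dq] h p(2) by simp
      qed
      then have "p \<in> TT w B (M-1)" unfolding TT_def using p(1) by simp
      then show "q \<in> (\<lambda>p. p@[M]) ` TT w B (M-1)" using p(2) by blast
    qed
  next
    show "(\<lambda>p. p@[M]) ` TT w B (M-1) \<subseteq> {q\<in>TT w B M. last q = M}"
    proof
      fix q assume "q \<in> (\<lambda>p. p@[M]) ` TT w B (M-1)"
      then obtain p where p: "p \<in> TT w B (M-1)" "q = p@[M]" by auto
      have pD: "p \<in> DD (M-1) B" and incr: "\<forall>j\<in>set p. \<forall>k\<in>set p. w \<le> j \<longrightarrow> j < k \<longrightarrow> pos p j < pos p k"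
        using p(1) unfolding TT_def by auto
      have qD: "q \<in> DD M B" "last q = M" using fiber_top[OF M1, of B] pD p(2) by blast+
      have sp: "set p = {1..M-1}" using pD unfolding DD_def by simp
      have dq: "distinct (p@[M])" using qD p(2) unfolding DD_def by simp
      have "\<forall>j\<in>set q. \<forall>k\<in>set q. w \<le> j \<longrightarrow> j < k \<longrightarrow> pos q j < pos q k"
      proof (intro ballI impI)
        fix j k assume h: "j \<in> set q" "k \<in> set q" "w \<le> j" "j < k"
        have pM: "\<forall>y\<in>set p. y \<le> M" unfolding sp by auto
        have kM: "k \<le> M" using h(2) p(2) pM by auto
        then have jp: "j \<in> set p" using h(1) h(4) p(2) by auto
        show "pos q j < pos q k"
        proof (cases "k = M")
          case True
          have "pos q j < length p" using pos_append_left[OF dq jp] pos_in[OF jp] p(2) by simp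
          moreover have "pos q M = length p" using pos_append_right[OF dq, of M] pos_Cons_hd[of M "[]"] p(2) by simp
          ultimately show ?thesis using True by simp
        next
          case False
          then have kp: "k \<in> set p" using h(2) p(2) by auto
          then have "pos p j < pos p k" using incr jp h by blast
          then show ?thesis using pos_append_left[OF dq] jp kp p(2) by simp
        qed
      qed
      then show "q \<in> {q\<in>TT w B M. last q = M}" unfolding TT_def using qD by simp
    qed
  qed
  have fin: "finite (TT w B M)" unfolding TT_def using DD_finite by simp
  have "card (TT w B M) = card {q\<in>TT w B M. last q = M} + card {q\<in>DD M B. last q < w}"
  proof -
    have "card ({q\<in>TT w B M. last q = M} \<union> {q\<in>DD M B. last q < w})
        = card {q\<in>TT w B M. last q = M} + card {q\<in>DD M B. last q < w}"
      by (rule card_Un_disjoint) (use fin DD_finite wM in auto)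
    then show ?thesis using split by simp
  qed
  moreover have "card {q\<in>TT w B M. last q = M} = card (TT w B (M-1))"
    unfolding top by (rule card_image) (simp add: inj_on_def)
  ultimately show ?thesis by simp
qed

lemma stepA:
  assumes wA: "w \<in> A" and Aw: "\<forall>b\<in>A. b \<le> w" and w1: "1 \<le> w" and wM: "w < M"
  shows "card (DD M A) = (\<Sum>x\<in>{Suc w..M}. card (DD (x-1) A)) + card {q\<in>DD M A. last q = w}"
proof -
  define c where "c x = card {q\<in>DD M A. last q = x}" for x
  have M1: "M \<ge> 1" using w1 wM by simp
  have "card (DD M A) = (\<Sum>x=1..M. c x)" unfolding c_def by (rule card_DD_sum[OF M1])
  also have "{1..M} = {1..<w} \<union> insert w {Suc w..M}" using w1 wM by auto
  also have "(\<Sum>x\<in>{1..<w} \<union> insert w {Suc w..M}. c x) = (\<Sum>x\<in>{1..<w}. c x) + (\<Sum>x\<in>insert w {Suc w..M}. c x)"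
    by (rule sum.union_disjoint) auto
  also have "(\<Sum>x\<in>{1..<w}. c x) = 0"
  proof (rule sum.neutral, rule ballI)
    fix x assume "x \<in> {1..<w}"
    then have "{q\<in>DD M A. last q = x} = {}" using fiber_none[OF wA _ wM] by auto
    then show "c x = 0" unfolding c_def by (metis card.empty)
  qed
  also have "(\<Sum>x\<in>insert w {Suc w..M}. c x) = c w + (\<Sum>x\<in>{Suc w..M}. c x)"
    by (rule sum.insert) auto
  also have "(\<Sum>x\<in>{Suc w..M}. c x) = (\<Sum>x\<in>{Suc w..M}. card (DD (x-1) A))"
  proof (rule sum.cong[OF refl])
    fix x assume x: "x \<in> {Suc w..M}"
    show "c x = card (DD (x-1) A)"
    proof (cases "x = M")
      case True
      then show ?thesis unfolding c_def using card_fiber_top[OF M1] by simp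
    next
      case False
      then have "1 \<le> x" "x < M" "\<forall>b\<in>A. b < x" using x Aw by auto
      then show ?thesis unfolding c_def by (rule card_fiber_big)
    qed
  qed
  finally show ?thesis unfolding c_def by simp
qed

lemma stepC:
  assumes Bw: "\<forall>b\<in>B. b < w" and w1: "1 \<le> w" and wM: "w \<le> M"
  shows "card (DD M B) = (\<Sum>x\<in>{w..M}. card (DD (x-1) B)) + card {q\<in>DD M B. last q < w}"
proof -
  define c where "c x = card {q\<in>DD M B. last q = x}" for x
  have M1: "M \<ge> 1" using w1 wM by simp
  have "card (DD M B) = (\<Sum>x=1..M. c x)" unfolding c_def by (rule card_DD_sum[OF M1])
  also have "{1..M} = {1..<w} \<union> {w..M}" using w1 wM by auto
  also have "(\<Sum>x\<in>{1..<w} \<union> {w..M}. c x) = (\<Sum>x\<in>{1..<w}. c x) + (\<Sum>x\<in>{w..M}. c x)"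
    by (rule sum.union_disjoint) auto
  also have "(\<Sum>x\<in>{1..<w}. c x) = card {q\<in>DD M B. last q < w}"
    unfolding c_def by (rule card_last_less[OF M1, symmetric])
  also have "(\<Sum>x\<in>{w..M}. c x) = (\<Sum>x\<in>{w..M}. card (DD (x-1) B))"
  proof (rule sum.cong[OF refl])
    fix x assume x: "x \<in> {w..M}"
    show "c x = card (DD (x-1) B)"
    proof (cases "x = M")
      case True
      then show ?thesis unfolding c_def using card_fiber_top[OF M1] by simp
    next
      case False
      then have "1 \<le> x" "x < M" "\<forall>b\<in>B. b < x" using x Bw w1 by auto
      then show ?thesis unfolding c_def by (rule card_fiber_big)
    qed
  qed
  finally show ?thesis by simp
qed

theorem proposition5:
  fixes n :: nat and A :: "nat set"
  assumes "n \<ge> 3" and "A \<subseteq> {1..n-1}" and "A \<noteq> {}"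
    and "1 < Max A" and "Max A < n - 1"
  shows "int (f n A) = 2 * int (f (n-1) A) + int (f (n-1) (A - {Max A}))
           - (\<Sum>j = Max A - 1..n-2. int (f j (A - {Max A})))"
proof -
  define w where "w = Max A"
  define A' where "A' = A - {w}"
  have finA: "finite A" using assms(2) finite_subset by blast
  have wA: "w \<in> A" unfolding w_def using finA assms(3) by (rule Max_in)
  have Aw: "\<forall>b\<in>A. b \<le> w" unfolding w_def using finA by simp
  have w1: "1 \<le> w" and w2: "1 < w" and wn: "w < n - 1" using assms(4,5) unfolding w_def by auto
  have A'w: "\<forall>b\<in>A'. b < w" unfolding A'_def using Aw by force
  define F where "F j = card (DD j A)" for j
  define E where "E j = card (DD j A')" for j
  define G where "G M = card {q\<in>DD M A. last q = w}" for M
  define H where "H M = card (TT w A' M)" for M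
  define U where "U = card {q\<in>DD (n-1) A'. last q < w}"
  have n1: "Suc (n-1) = n" "Suc (n-2) = n - 1" using wn by auto
  have e1: "F n = (\<Sum>x\<in>{Suc w..n}. F (x-1)) + G n"
    unfolding F_def G_def using stepA[OF wA Aw w1, of n] wn by simp
  have e2: "F (n-1) = (\<Sum>x\<in>{Suc w..n-1}. F (x-1)) + G (n-1)"
    unfolding F_def G_def using stepA[OF wA Aw w1, of "n-1"] wn by simp
  have e3: "(\<Sum>x\<in>{Suc w..n}. F (x-1)) = (\<Sum>x\<in>{Suc w..n-1}. F (x-1)) + F (n-1)"
  proof -
    have "{Suc w..Suc (n-1)} = insert (Suc (n-1)) {Suc w..n-1}"
      by (rule atLeastAtMostSuc_conv) (use wn in simp)
    then have "{Suc w..n} = insert n {Suc w..n-1}" unfolding n1(1) .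
    moreover have "(\<Sum>x\<in>insert n {Suc w..n-1}. F (x-1)) = F (n-1) + (\<Sum>x\<in>{Suc w..n-1}. F (x-1))"
      by (rule sum.insert) auto
    ultimately show ?thesis by simp
  qed
  have le1: "w \<le> n-1" "w \<le> n-2" "w < n-1" using wn by auto
  have e4: "G n = H (n-1)"
    using G_TT[OF wA Aw w1 le1(1)] unfolding G_def H_def A'_def n1(1) .
  have e5: "G (n-1) = H (n-2)"
    using G_TT[OF wA Aw w1 le1(2)] unfolding G_def H_def A'_def n1(2) .
  have nn: "n - 1 - 1 = n - 2" by simp
  have e6: "H (n-1) = H (n-2) + U"
    using TT_rec[OF A'w w1 le1(3)] unfolding H_def U_def nn .
  have e7: "E (n-1) = (\<Sum>x\<in>{w..n-1}. E (x-1)) + U"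
    using stepC[OF A'w w1 le1(1)] unfolding E_def U_def .
  have e8: "(\<Sum>x\<in>{w..n-1}. E (x-1)) = (\<Sum>j\<in>{w-1..n-2}. E j)"
  proof -
    have "(\<Sum>x\<in>{w-1+1..n-2+1}. E (x-1)) = (\<Sum>j\<in>{w-1..n-2}. E (j+1-1))"
      by (rule sum.shift_bounds_cl_nat_ivl)
    moreover have a: "w-1+1 = w" and b: "n-2+1 = n-1" using w1 wn by auto
    ultimately show ?thesis unfolding a b add_diff_cancel_right' by blast
  qed
  have fF: "\<And>j. f j A = F j" unfolding F_def by (rule f_DD)
  have fE: "\<And>j. f j (A - {Max A}) = E j" unfolding E_def A'_def w_def by (rule f_DD)
  have "(\<Sum>j = Max A - 1..n-2. int (f j (A - {Max A}))) = int (\<Sum>j\<in>{w-1..n-2}. E j)"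
    unfolding fE w_def by (simp add: of_nat_sum)
  moreover have "int (F n) = 2 * int (F (n-1)) + int (E (n-1)) - int (\<Sum>j\<in>{w-1..n-2}. E j)"
    using e1 e2 e3 e4 e5 e6 e7 e8 by linarith
  ultimately show ?thesis unfolding fF fE by simp
qed

end
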